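(* The polynomial sequences $(G_n(q))_{n\ge1}$ and $(S_n(q))_{n\ge1}$ are $q$-Euler–Gauss sequences, and neither satisfies the $q$-Gauss congruence $\sum_{d\mid n}\mu(d)a_{n/d}(q^d)\equiv 0\pmod{[n]_q}$ at any composite square-free $n$.
   Context: $\Phi_k(q)$ is the $k$-th cyclotomic polynomial, $\mu$ the Möbius function, and $[n]_q=1+q+\dots+q^{n-1}$. For $n>1$ let $s_n$ be the smallest prime factor of $n$ and $g_n$ the greatest prime factor of $n$. Define $S_1(q)=G_1(q)=\Phi_1(q)=q-1$, and for $n>1$, $S_n(q)=\Phi_{s_n}(q^{n/s_n})$ and $G_n(q)=\Phi_{g_n}(q^{n/g_n})$. Congruences of polynomials modulo $[n]_q$ mean divisibility of the difference by $[n]_q$ in $\mathbb{Z}[q]$. A sequence $(a_n(q))$ in $\mathbb{Z}[q]$ is a $q$-Euler–Gauss sequence if for all $n\ge1$, $\prod_{d\mid n,\,\mu(d)=1}a_{n/d}(q^d)\equiv\prod_{d\mid n,\,\mu(d)=-1}a_{n/d}(q^d)\pmod{[n]_q}$. *)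

theory Defs
  imports "HOL-Computational_Algebra.Computational_Algebra"
begin

definition moebius :: "nat \<Rightarrow> int" where
  "moebius n = (if n = 0 \<or> \<not> squarefree n then 0 else (-1) ^ card (prime_factors n))"

text \<open>k-th cyclotomic polynomial via the Moebius product formula
  Phi_k(q) = prod_{d | k} (q^d - 1)^{mu(k/d)} (exact division in Z[q]).\<close>
definition cyclotomic :: "nat \<Rightarrow> int poly" where
  "cyclotomic k =
     (\<Prod>d\<in>{d. d dvd k \<and> moebius (k div d) = 1}. monom 1 d - 1) div
     (\<Prod>d\<in>{d. d dvd k \<and> moebius (k div d) = -1}. monom 1 d - 1)"

definition qint :: "nat \<Rightarrow> int poly" where
  "qint n = (\<Sum>i<n. monom 1 i)"

definition subst_pow :: "int poly \<Rightarrow> nat \<Rightarrow> int poly" where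
  "subst_pow p d = pcompose p (monom 1 d)"

definition S_seq :: "nat \<Rightarrow> int poly" where
  "S_seq n = (if n = 1 then [:-1, 1:]
              else subst_pow (cyclotomic (Min (prime_factors n))) (n div Min (prime_factors n)))"

definition G_seq :: "nat \<Rightarrow> int poly" where
  "G_seq n = (if n = 1 then [:-1, 1:]
              else subst_pow (cyclotomic (Max (prime_factors n))) (n div Max (prime_factors n)))"

definition q_Euler_Gauss :: "(nat \<Rightarrow> int poly) \<Rightarrow> bool" where
  "q_Euler_Gauss a \<longleftrightarrow> (\<forall>n\<ge>1.
     qint n dvd
       ((\<Prod>d\<in>{d. d dvd n \<and> moebius d = 1}. subst_pow (a (n div d)) d) -
        (\<Prod>d\<in>{d. d dvd n \<and> moebius d = -1}. subst_pow (a (n div d)) d)))"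

definition q_Gauss_at :: "(nat \<Rightarrow> int poly) \<Rightarrow> nat \<Rightarrow> bool" where
  "q_Gauss_at a n \<longleftrightarrow>
     qint n dvd (\<Sum>d\<in>{d. d dvd n}. smult (moebius d) (subst_pow (a (n div d)) d))"

end

theory Submission
  imports Defs
begin


lemma pcompose_xpow: "pcompose ([:0,1:]^k) r = (r::'a::comm_ring_1 poly)^k"
  by (induction k) (simp_all add: pcompose_mult pcompose_pCons pcompose_1)

lemma subst_pow_monom: "subst_pow (monom 1 k) d = monom 1 (k*d)"
  unfolding subst_pow_def
  by (simp add: monom_altdef pcompose_xpow) (metis power_mult mult.commute)

lemma subst_pow_mult: "subst_pow (p*q) d = subst_pow p d * subst_pow q d"
  by (simp add: subst_pow_def pcompose_mult)

lemma subst_pow_diff: "subst_pow (p-q) d = subst_pow p d - subst_pow q d"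
  by (simp add: subst_pow_def pcompose_diff)

lemma subst_pow_const: "subst_pow [:c:] d = [:c:]"
  by (simp add: subst_pow_def)

lemma subst_pow_1: "subst_pow 1 d = 1"
  by (simp add: subst_pow_def pcompose_1)

lemma subst_pow_prod: "subst_pow (prod f A) d = (\<Prod>i\<in>A. subst_pow (f i) d)"
  by (simp add: subst_pow_def pcompose_prod)

lemma subst_pow_subst_pow: "subst_pow (subst_pow p k) d = subst_pow p (k*d)"
  unfolding subst_pow_def
  by (metis pcompose_assoc subst_pow_def subst_pow_monom)

lemma subst_pow_dvd: "a dvd b \<Longrightarrow> subst_pow a d dvd subst_pow b d"
  by (metis dvdE dvd_triv_left subst_pow_mult)

lemma subst_pow_X1: "subst_pow [:-1,1:] d = monom 1 d - 1"
proof -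
  have "[:-1,1:] = monom 1 1 - (1::int poly)" by (simp add: monom_Suc monom_0 one_pCons)
  then show ?thesis by (simp add: subst_pow_diff subst_pow_monom subst_pow_1)
qed

lemma qint_Suc: "qint (Suc n) = qint n + monom 1 n"
  by (simp add: qint_def)

lemma qint_Suc': "qint (Suc n) = 1 + monom 1 1 * qint n"
proof (induction n)
  case 0 then show ?case by (simp add: qint_def monom_0)
next
  case (Suc n)
  have "qint (Suc (Suc n)) = qint (Suc n) + monom 1 (Suc n)" by (rule qint_Suc)
  also have "\<dots> = 1 + monom 1 1 * qint n + monom 1 1 * monom 1 n" using Suc by (simp add: mult_monom)
  also have "\<dots> = 1 + monom 1 1 * qint (Suc n)" by (simp add: qint_Suc algebra_simps)
  finally show ?case .
qed

lemma X1_qint: "[:-1,1:] * qint n = monom 1 n - 1"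
proof (induction n)
  case 0 then show ?case by (simp add: qint_def monom_0)
next
  case (Suc n)
  have m: "[:-1,1:] * monom 1 n = monom 1 (Suc n) - (monom 1 n :: int poly)"
    by (simp add: monom_Suc algebra_simps)
  show ?case using Suc by (simp add: qint_Suc distrib_left m monom_Suc)
qed

lemma qint_0: "qint 0 = 0" by (simp add: qint_def)
lemma qint_1: "qint 1 = 1" by (simp add: qint_def monom_0 one_pCons)

lemma X1_nz: "[:-1,1:] \<noteq> (0::int poly)" by simp

lemma qint_nz: "n > 0 \<Longrightarrow> qint n \<noteq> 0"
proof
  assume "n > 0" "qint n = 0"
  then have "monom 1 n - 1 = (0::int poly)" using X1_qint[of n] by simp
  then have "monom 1 n = (1::int poly)" by simp
  with \<open>n>0\<close> show False by (simp add: monom_eq_1_iff)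
qed

lemma degree_qint: "n > 0 \<Longrightarrow> degree (qint n) = n - 1"
proof -
  assume n: "n > 0"
  have "degree ([:-1,1:] * qint n) = 1 + degree (qint n)"
    using qint_nz[OF n] by (subst degree_mult_eq) auto
  moreover have "degree (monom 1 n - 1 :: int poly) = n"
    using n by (simp only: diff_conv_add_uminus, subst degree_add_eq_left) (auto simp: degree_monom_eq)
  ultimately show ?thesis using X1_qint[of n] by simp
qed

lemma qint_mult: "qint (a*b) = subst_pow (qint a) b * qint b"
proof -
  have "[:-1,1:] * (subst_pow (qint a) b * qint b) = subst_pow (qint a) b * ([:-1,1:] * qint b)"
    by (simp only: ac_simps)
  also have "\<dots> = subst_pow (qint a) b * subst_pow [:-1,1:] b"
    by (simp only: X1_qint subst_pow_X1)
  also have "\<dots> = subst_pow ([:-1,1:] * qint a) b"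
    by (simp only: subst_pow_mult ac_simps)
  also have "\<dots> = monom 1 (a*b) - 1"
    by (simp only: X1_qint subst_pow_diff subst_pow_monom subst_pow_1)
  also have "\<dots> = [:-1,1:] * qint (a*b)"
    by (simp only: X1_qint)
  finally show ?thesis using X1_nz by (metis mult_left_cancel)
qed



lemma bez_dvd_mult:
  fixes a b c :: "'a::comm_ring_1"
  assumes "1 = a*u - b*v" "a dvd c" "b dvd c"
  shows "a*b dvd c"
proof -
  have "c = c*(a*u - b*v)" using assms(1) by simp
  also have "\<dots> = (c*a)*u - (c*b)*v" by (simp add: algebra_simps)
  finally have c: "c = (c*a)*u - (c*b)*v" .
  have "a*b dvd (c*a)*u" using assms(3) by (simp add: mult.commute mult_dvd_mono)
  moreover have "a*b dvd (c*b)*v" using assms(2) by (simp add: mult_dvd_mono)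
  ultimately show ?thesis by (subst c) (rule dvd_diff)
qed

lemma qint_coprime_dvd:
  assumes "coprime a b" "a > 0" "b > 0"
  shows "qint a * qint b dvd qint (a*b)"
proof -
  obtain x y where xy: "a*x = b*y + gcd a b" using bezout_nat[of a b] assms by auto
  then have xy': "a*x = Suc (b*y)" using assms(1) by simp
  have "qint (a*x) = 1 + monom 1 1 * qint (b*y)" using xy' qint_Suc' by simp
  then have one: "1 = qint (a*x) - monom 1 1 * qint (b*y)" by simp
  have da: "qint a dvd qint (a*x)" using qint_mult[of x a] by (simp add: mult.commute)
  have db: "qint b dvd qint (b*y)" using qint_mult[of y b] by (simp add: mult.commute)
  obtain U where U: "qint (a*x) = qint a * U" using da by blast
  obtain V where V: "qint (b*y) = qint b * V" using db by blast
  have "1 = qint a * U - qint b * (monom 1 1 * V)" using one U V by (simp add: ac_simps)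
  moreover have "qint a dvd qint (a*b)" using qint_mult[of b a] by (simp add: mult.commute)
  moreover have "qint b dvd qint (a*b)" using qint_mult[of a b] by simp
  ultimately show ?thesis by (rule bez_dvd_mult)
qed

lemma qint_coprime_subst:
  assumes "coprime a b" "a > 0" "b > 0"
  shows "qint (a*b) dvd subst_pow (qint a) b * subst_pow (qint b) a"
proof -
  obtain c where c: "qint (a*b) = qint a * qint b * c" using qint_coprime_dvd[OF assms] by blast
  have e1: "qint (a*b) = subst_pow (qint a) b * qint b" by (rule qint_mult)
  have e2: "qint (a*b) = subst_pow (qint b) a * qint a" using qint_mult[of b a] by (simp add: mult.commute)
  have "(subst_pow (qint a) b * subst_pow (qint b) a) * (qint a * qint b) = qint (a*b) * qint (a*b)"
    by (subst (2) e1, subst e2) (simp add: ac_simps)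
  also have "\<dots> = (qint (a*b) * c) * (qint a * qint b)" by (subst (1) c) (simp add: ac_simps)
  finally have "subst_pow (qint a) b * subst_pow (qint b) a = qint (a*b) * c"
    using qint_nz assms(2,3) by (simp add: mult_right_cancel)
  then show ?thesis by simp
qed

lemma moebius_1: "moebius 1 = 1"
  by (simp add: moebius_def)

lemma moebius_prime: "prime p \<Longrightarrow> moebius p = -1"
  by (simp add: moebius_def squarefree_prime prime_prime_factors prime_gt_0_nat)

lemma moebius_nz: "moebius d \<noteq> 0 \<Longrightarrow> squarefree d \<and> d > 0"
  by (auto simp: moebius_def split: if_splits)

lemma moebius_mult_prime:
  assumes "squarefree d" "d > 0" "prime p" "\<not> p dvd d"
  shows "moebius (d*p) = - moebius d"
proof -
  have cop: "coprime d p" using prime_imp_coprime[OF assms(3,4)] by (metis coprime_commute)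
  have sq: "squarefree (d*p)" using squarefree_mult_coprime[OF cop assms(1) squarefree_prime[OF assms(3)]] .
  have pf: "prime_factors (d*p) = insert p (prime_factors d)"
    using assms by (simp add: prime_factors_product prime_prime_factors prime_gt_0_nat)
  have "p \<notin> prime_factors d" using assms(4) by (auto simp: in_prime_factors_iff)
  then have "card (prime_factors (d*p)) = Suc (card (prime_factors d))" by (simp add: pf)
  then show ?thesis using sq assms by (simp add: moebius_def prime_gt_0_nat)
qed

lemma cyclotomic_prime:
  assumes "prime p" shows "cyclotomic p = qint p"
proof -
  have p1: "p > 1" using assms prime_gt_1_nat by blast
  have dv: "d dvd p \<longleftrightarrow> d = 1 \<or> d = p" for d
    using assms unfolding prime_nat_iff by auto
  have m1': "moebius 1 = 1" "moebius p = -1" using moebius_1 moebius_prime[OF assms] by auto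
  have A: "{d. d dvd p \<and> moebius (p div d) = 1} = {p}"
  proof (rule set_eqI)
    fix d show "d \<in> {d. d dvd p \<and> moebius (p div d) = 1} \<longleftrightarrow> d \<in> {p}"
      using dv[of d] p1 m1' by (cases "d = 1") auto
  qed
  have B: "{d. d dvd p \<and> moebius (p div d) = -1} = {1}"
  proof (rule set_eqI)
    fix d show "d \<in> {d. d dvd p \<and> moebius (p div d) = -1} \<longleftrightarrow> d \<in> {1}"
      using dv[of d] p1 m1' by (cases "d = 1") auto
  qed
  have m1: "monom 1 (Suc 0) - 1 = ([:-1,1:] :: int poly)" by (simp add: monom_Suc monom_0 one_pCons)
  have "cyclotomic p = (monom 1 p - 1) div [:-1,1:]"
    unfolding cyclotomic_def A B by (simp add: m1)
  also have "\<dots> = ([:-1,1:] * qint p) div [:-1,1:]" by (simp only: X1_qint)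
  also have "\<dots> = qint p" using X1_nz by (rule nonzero_mult_div_cancel_left)
  finally show ?thesis .
qed

lemma key_sqf:
  assumes "squarefree n" "n > 0"
  shows "qint n dvd (\<Prod>p\<in>prime_factors n. subst_pow (qint p) (n div p))"
  using assms
proof (induction n rule: less_induct)
  case (less n)
  show ?case
  proof (cases "n = 1")
    case True then show ?thesis by (simp add: qint_def)
  next
    case False
    then obtain p where "prime p" "p dvd n" using prime_factor_nat by blast
    then have p: "p \<in> prime_factors n" using less.prems by (auto simp: in_prime_factors_iff)
    have pp: "prime p" and pd: "p dvd n" using p by (auto simp: in_prime_factors_iff)
    define M where "M = n div p"
    have nM: "n = p * M" using pd M_def by simp
    have Mpos: "M > 0" using nM less.prems by auto
    have p1: "p > 1" using pp prime_gt_1_nat by blast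
    have Mlt: "M < n" using nM Mpos p1 by simp
    have pM: "\<not> p dvd M"
    proof
      assume "p dvd M"
      then have "p*p dvd n" using nM by simp
      then show False using less.prems(1) pp unfolding squarefree_def
        by (metis power2_eq_square not_prime_unit)
    qed
    have sqM: "squarefree M" using less.prems(1) nM squarefree_multD(2) by blast
    have IH: "qint M dvd (\<Prod>p'\<in>prime_factors M. subst_pow (qint p') (M div p'))"
      using less.IH[OF Mlt sqM Mpos] .
    have IH2: "subst_pow (qint M) p dvd (\<Prod>p'\<in>prime_factors M. subst_pow (qint p') (n div p'))"
    proof -
      have "subst_pow (qint M) p dvd subst_pow (\<Prod>p'\<in>prime_factors M. subst_pow (qint p') (M div p')) p"
        by (rule subst_pow_dvd[OF IH])
      also have "\<dots> = (\<Prod>p'\<in>prime_factors M. subst_pow (qint p') (n div p'))"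
      proof -
        have "\<And>p'. p' \<in> prime_factors M \<Longrightarrow> (M div p') * p = n div p'"
          using nM by (auto simp: in_prime_factors_iff mult.commute div_mult_swap)
        then show ?thesis by (simp add: subst_pow_prod subst_pow_subst_pow)
      qed
      finally show ?thesis .
    qed
    have cop: "coprime p M" using pp pM by (simp add: prime_imp_coprime)
    have step: "qint n dvd subst_pow (qint p) M * subst_pow (qint M) p"
      using qint_coprime_subst[OF cop _ Mpos] p1 nM by simp
    have pfn: "prime_factors n = insert p (prime_factors M)"
      using nM pp Mpos by (simp add: prime_factors_product prime_prime_factors prime_gt_0_nat)
    have pnot: "p \<notin> prime_factors M" using pM by (auto simp: in_prime_factors_iff)
    have "qint n dvd subst_pow (qint p) (n div p) * (\<Prod>p'\<in>prime_factors M. subst_pow (qint p') (n div p'))"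
      using dvd_trans[OF step mult_dvd_mono[OF dvd_refl IH2]] M_def by simp
    then show ?thesis using pfn pnot by simp
  qed
qed



lemma pf_prime: "prime p \<Longrightarrow> prime_factors p = {p}"
  by (simp add: prime_prime_factors)

lemma pf_mult_prime:
  assumes "prime p" "(k::nat) > 0"
  shows "prime_factors (k*p) = insert p (prime_factors k)"
  using assms by (subst prime_factors_product) (auto simp: pf_prime prime_gt_0_nat)

lemma sqf_div_prime:
  assumes "squarefree d" "prime p" "p dvd d"
  shows "\<not> p dvd d div p"
proof
  assume "p dvd d div p"
  then have "p*p dvd d" using assms(3) by (metis dvd_div_iff_mult dvd_mult_div_cancel mult_dvd_mono dvd_refl)
  then show False using assms(1,2) unfolding squarefree_def
    by (metis power2_eq_square not_prime_unit)
qed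

lemma moebius_div_prime:
  assumes "squarefree d" "d > 0" "prime p" "p dvd d"
  shows "moebius (d div p) = - moebius d"
proof -
  have d: "d = (d div p) * p" using assms(4) by simp
  have "squarefree (d div p)" using assms(1) d squarefree_multD(1) by metis
  moreover have "d div p > 0" using assms by (metis d gr0I mult_0)
  ultimately have "moebius ((d div p)*p) = - moebius (d div p)"
    using moebius_mult_prime sqf_div_prime assms by blast
  then show ?thesis using d by simp
qed

lemma coprime_mult_dvd:
  fixes d p n :: nat
  assumes "prime p" "\<not> p dvd d" "d dvd n" "p dvd n"
  shows "d*p dvd n"
proof -
  have "coprime d p" using prime_imp_coprime[OF assms(1,2)] by (metis coprime_commute)
  then show ?thesis using assms(3,4) by (simp add: divides_mult)
qed

locale qseq =
  fixes a :: "nat \<Rightarrow> int poly" and chi :: "nat set \<Rightarrow> nat"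
  assumes a1: "a 1 = [:-1,1:]"
    and an: "\<And>m. m > 1 \<Longrightarrow> a m = subst_pow (qint (chi (prime_factors m))) (m div chi (prime_factors m))"
    and ch: "\<And>m. m > 1 \<Longrightarrow> chi (prime_factors m) \<in> prime_factors m"
begin

definition T :: "nat \<Rightarrow> nat \<Rightarrow> int poly" where
  "T n d = subst_pow (a (n div d)) d"

lemma T_lt:
  assumes "d dvd n" "d < n"
  shows "T n d = subst_pow (qint (chi (prime_factors (n div d)))) (n div chi (prime_factors (n div d)))"
proof -
  define m where "m = n div d"
  have d0: "d > 0" using assms by (metis dvd_0_left_iff gr0I less_not_refl)
  have nm: "n = m * d" using assms(1) m_def by simp
  have m1: "m > 1" using nm assms d0 by (metis less_one mult_1 mult_eq_0_iff nat_neq_iff not_less_zero)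
  define p where "p = chi (prime_factors m)"
  have pm: "p dvd m" using ch[OF m1] p_def by (auto simp: in_prime_factors_iff)
  have "T n d = subst_pow (qint p) ((m div p) * d)"
    unfolding T_def m_def[symmetric] using an[OF m1] p_def by (simp add: subst_pow_subst_pow)
  also have "(m div p) * d = n div p" using nm pm by (metis div_mult_swap mult.commute)
  finally show ?thesis using p_def m_def by simp
qed

lemma T_prime:
  assumes "p dvd n" "prime p" "n > 0"
  shows "T n (n div p) = subst_pow (qint p) (n div p)"
proof -
  have p1: "p > 1" using assms prime_gt_1_nat by blast
  obtain k where k: "n = p*k" using assms(1) by blast
  have "k > 0" using k assms(3) by (metis gr0I mult_0_right)
  then have e: "n div (n div p) = p" using k p1 by simp
  have lt: "n div p < n" using assms p1 by simp
  have "chi (prime_factors p) = p" using ch[OF p1] pf_prime[OF assms(2)] by simp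
  moreover have dd: "n div p dvd n" using k p1 by simp
  ultimately show ?thesis using T_lt[OF dd lt] e
    by (simp add: assms(1))
qed

lemma T_n: assumes "n > 0" shows "T n n = [:-1,1:] * qint n"
proof -
  have "T n n = subst_pow (a 1) n" unfolding T_def using assms by simp
  also have "\<dots> = monom 1 n - 1" by (simp only: a1 subst_pow_X1)
  finally show ?thesis by (simp only: X1_qint)
qed

lemma finite_div: "(n::nat) > 0 \<Longrightarrow> finite {d. d dvd n \<and> P d}"
  by (rule finite_subset[of _ "{..n}"]) (auto intro: dvd_imp_le)

end



definition tog :: "nat \<Rightarrow> nat \<Rightarrow> nat" where
  "tog p d = (if p dvd d then d div p else d * p)"

lemma tog_facts:
  fixes n p d :: nat
  assumes "prime p" "p dvd n" "n > 0" "d dvd n" "squarefree d"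
  shows "tog p d dvd n" "tog p (tog p d) = d" "moebius (tog p d) = - moebius d"
    "squarefree (tog p d)" 
proof -
  have d0: "d > 0" using assms by (metis dvd_0_left_iff gr0I less_not_refl)
  have p1: "p > 1" using assms prime_gt_1_nat by blast
  show "tog p d dvd n"
  proof (cases "p dvd d")
    case True
    then have "d div p dvd d" by (metis dvd_div_mult_self dvd_triv_left)
    then show ?thesis using True assms(4) by (simp add: tog_def dvd_trans)
  next
    case False then show ?thesis using coprime_mult_dvd[OF assms(1) False assms(4,2)] by (simp add: tog_def)
  qed
  show "tog p (tog p d) = d"
  proof (cases "p dvd d")
    case True
    then show ?thesis using sqf_div_prime[OF assms(5,1) True] by (simp add: tog_def)
  next
    case False then show ?thesis using p1 by (simp add: tog_def)
  qed
  show mu: "moebius (tog p d) = - moebius d"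
  proof (cases "p dvd d")
    case True
    then show ?thesis using moebius_div_prime[OF assms(5) d0 assms(1) True] by (simp add: tog_def)
  next
    case False then show ?thesis using moebius_mult_prime[OF assms(5) d0 assms(1) False] by (simp add: tog_def)
  qed
  have "moebius d \<noteq> 0" using assms(5) d0 by (simp add: moebius_def)
  then show "squarefree (tog p d)" using mu moebius_nz by (metis neg_equal_0_iff_equal)
qed

lemma pf_same:
  fixes n p d :: nat
  assumes "prime p" "p^2 dvd n" "\<not> p dvd d" "d*p dvd n" "n > 0"
  shows "prime_factors (n div d) = prime_factors (n div (d*p))"
proof -
  define k where "k = n div (d*p)"
  have nk: "n = d*p*k" using assms(4) k_def by simp
  have k0: "k > 0" using nk assms(5) by (metis gr0I mult_0_right)
  have d0: "d > 0" using nk assms(5) by (metis gr0I mult_0)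
  have "d*p*k = p*(d*k)" by simp
  then have "p*p dvd p*(d*k)" using assms(2) nk by (simp add: power2_eq_square)
  then have "p dvd d*k" using nat_mult_dvd_cancel1[OF prime_gt_0_nat[OF assms(1)]] by blast
  then have pk: "p dvd k" using assms(1,3) by (simp add: prime_dvd_mult_iff)
  have "n div d = k*p" using nk d0 by simp
  then have "prime_factors (n div d) = insert p (prime_factors k)"
    using pf_mult_prime[OF assms(1) k0] by simp
  also have "\<dots> = prime_factors k" using pk k0 assms(1) by (auto simp: in_prime_factors_iff)
  finally show ?thesis using k_def by simp
qed

context qseq begin

lemma EG_nonsqf:
  assumes "n > 0" "\<not> squarefree n"
  shows "(\<Prod>d\<in>{d. d dvd n \<and> moebius d = 1}. T n d) = (\<Prod>d\<in>{d. d dvd n \<and> moebius d = -1}. T n d)"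
proof -
  obtain p where pp: "prime p" and p2: "p^2 dvd n"
    using assms squarefree_factorial_semiring[of n] by auto
  have pn: "p dvd n" using p2 by (metis dvd_power dvd_trans zero_less_numeral)
  have lt: "d < n" if "d dvd n" "squarefree d" for d
    using that assms dvd_imp_le[of d n] by (metis le_neq_implies_less)
  have Teq: "T n (tog p d) = T n d" if d: "d dvd n" "squarefree d" for d
  proof -
    have f: "tog p d dvd n" "squarefree (tog p d)" using tog_facts[OF pp pn assms(1) d] by auto
    have pfe: "prime_factors (n div d) = prime_factors (n div tog p d)"
    proof (cases "p dvd d")
      case True
      have nd: "\<not> p dvd d div p" using sqf_div_prime[OF d(2) pp True] .
      have "prime_factors (n div (d div p)) = prime_factors (n div (d div p * p))"
        using pf_same[OF pp p2 nd _ assms(1)] True d(1) by simp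
      then show ?thesis using True by (simp add: tog_def)
    next
      case False
      show ?thesis using pf_same[OF pp p2 False _ assms(1)] coprime_mult_dvd[OF pp False d(1) pn]
        False by (simp add: tog_def)
    qed
    show ?thesis using T_lt[OF d(1) lt[OF d]] T_lt[OF f(1) lt[OF f]] pfe by simp
  qed
  have sq: "squarefree d" if "moebius d = 1 \<or> moebius d = -1" for d
    using that moebius_nz by fastforce
  show ?thesis
  proof (rule prod.reindex_bij_witness[where i="tog p" and j="tog p"])
    fix b assume "b \<in> {d. d dvd n \<and> moebius d = 1}"
    then have b: "b dvd n" "moebius b = 1" "squarefree b" using sq by auto
    show "tog p (tog p b) = b" "tog p b \<in> {d. d dvd n \<and> moebius d = -1}" "T n (tog p b) = T n b"
      using tog_facts[OF pp pn assms(1) b(1,3)] b Teq by auto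
  next
    fix b assume "b \<in> {d. d dvd n \<and> moebius d = -1}"
    then have b: "b dvd n" "moebius b = -1" "squarefree b" using sq by auto
    show "tog p (tog p b) = b" "tog p b \<in> {d. d dvd n \<and> moebius d = 1}"
      using tog_facts[OF pp pn assms(1) b(1,3)] b by auto
  qed
qed

end


context qseq begin

lemma EG_sqf:
  assumes "n > 1" "squarefree n"
  shows "qint n dvd (\<Prod>d\<in>{d. d dvd n \<and> moebius d = moebius n}. T n d)"
    "qint n dvd (\<Prod>d\<in>{d. d dvd n \<and> moebius d = - moebius n}. T n d)"
proof -
  have n0: "n > 0" using assms by simp
  show "qint n dvd (\<Prod>d\<in>{d. d dvd n \<and> moebius d = moebius n}. T n d)"
  proof (rule dvd_trans)
    show "qint n dvd T n n" unfolding T_n[OF n0] by (rule dvd_triv_right)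
    show "T n n dvd (\<Prod>d\<in>{d. d dvd n \<and> moebius d = moebius n}. T n d)"
      by (rule dvd_prodI) (auto intro: finite_div[OF n0])
  qed
  have inj: "inj_on (\<lambda>p. n div p) (prime_factors n)"
  proof (rule inj_onI)
    fix x y assume xy: "x \<in> prime_factors n" "y \<in> prime_factors n" "n div x = n div y"
    then have "x dvd n" "y dvd n" "x > 0" "y > 0" by (auto simp: in_prime_factors_iff prime_gt_0_nat)
    then show "x = y" using xy(3) n0 by (metis dvd_div_mult_self nat_mult_eq_cancel1 div_greater_zero_iff dvd_imp_le mult.commute)
  qed
  have sub: "(\<lambda>p. n div p) ` prime_factors n \<subseteq> {d. d dvd n \<and> moebius d = - moebius n}"
  proof
    fix x assume "x \<in> (\<lambda>p. n div p) ` prime_factors n"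
    then obtain p where p: "p \<in> prime_factors n" "x = n div p" by blast
    have pp: "prime p" "p dvd n" using p by (auto simp: in_prime_factors_iff)
    have "moebius (n div p) = - moebius n" using moebius_div_prime[OF assms(2) n0 pp] .
    then show "x \<in> {d. d dvd n \<and> moebius d = - moebius n}" using p pp by auto
  qed
  have "(\<Prod>d\<in>(\<lambda>p. n div p) ` prime_factors n. T n d) = (\<Prod>p\<in>prime_factors n. T n (n div p))"
    using prod.reindex[OF inj] by simp
  also have "\<dots> = (\<Prod>p\<in>prime_factors n. subst_pow (qint p) (n div p))"
    using T_prime n0 by (auto simp: in_prime_factors_iff intro!: prod.cong)
  finally have "qint n dvd (\<Prod>d\<in>(\<lambda>p. n div p) ` prime_factors n. T n d)"
    using key_sqf[OF assms(2) n0] by simp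
  then show "qint n dvd (\<Prod>d\<in>{d. d dvd n \<and> moebius d = - moebius n}. T n d)"
    using prod_dvd_prod_subset[OF finite_div[OF n0] sub] dvd_trans by blast
qed

theorem EG: "q_Euler_Gauss a"
  unfolding q_Euler_Gauss_def T_def[symmetric]
proof (intro allI impI)
  fix n :: nat assume n: "n \<ge> 1"
  show "qint n dvd (\<Prod>d\<in>{d. d dvd n \<and> moebius d = 1}. T n d) - (\<Prod>d\<in>{d. d dvd n \<and> moebius d = - 1}. T n d)"
  proof (cases "n = 1")
    case True then show ?thesis by (simp add: qint_def)
  next
    case False
    then have n1: "n > 1" using n by simp
    show ?thesis
    proof (cases "squarefree n")
      case False then show ?thesis using EG_nonsqf[of n] n1 by simp
    next
      case True
      have "moebius n = 1 \<or> moebius n = -1" using True n1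
        by (cases "even (card (prime_factors n))") (auto simp: moebius_def)
      then show ?thesis using EG_sqf[OF n1 True] by (auto intro: dvd_diff)
    qed
  qed
qed

end


lemma x_eq_neg_x: "(x::int poly) = - x \<Longrightarrow> x = 0"
proof -
  assume "x = - x"
  then have "smult 2 x = 0" by (metis add.right_inverse mult_2 smult_add_left one_add_one smult_1_left)
  then show "x = 0" by simp
qed

context qseq begin

lemma chi_step:
  assumes t: "t \<in> prime_factors n" and sq: "squarefree n" and n0: "n > 0"
    and chi_ins: "\<And>A. A \<subseteq> prime_factors n \<Longrightarrow> A \<noteq> {} \<Longrightarrow> t \<notin> A \<Longrightarrow> chi (insert t A) = chi A"
    and d: "\<not> t dvd d" "d*t dvd n" "n div (d*t) > 1"
  shows "chi (prime_factors (n div d)) = chi (prime_factors (n div (d*t)))"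
proof -
  have tp: "prime t" using t by (auto simp: in_prime_factors_iff)
  define k where "k = n div (d*t)"
  have nk: "n = d*t*k" using d(2) k_def by simp
  have k1: "k > 1" using d(3) k_def by simp
  have d0: "d > 0" using nk n0 by (metis gr0I mult_0)
  have "n div d = k*t" using nk d0 by simp
  then have e: "prime_factors (n div d) = insert t (prime_factors k)"
    using pf_mult_prime[OF tp] k1 by simp
  have tk: "t \<notin> prime_factors k"
  proof
    assume "t \<in> prime_factors k"
    then have "t dvd k" by (auto simp: in_prime_factors_iff)
    then have "t*t dvd n" using nk by (metis dvd_mult_left mult.assoc mult_dvd_mono dvd_refl mult.commute)
    then show False using sq tp unfolding squarefree_def by (metis power2_eq_square not_prime_unit)
  qed
  have ne: "prime_factors k \<noteq> {}"
  proof -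
    obtain q where "prime q" "q dvd k" using prime_factor_nat[of k] k1 by auto
    then have "q \<in> prime_factors k" using k1 by (auto simp: in_prime_factors_iff)
    then show ?thesis by auto
  qed
  have sub: "prime_factors k \<subseteq> prime_factors n" using nk n0 by (auto simp: in_prime_factors_iff)
  show ?thesis using chi_ins[OF sub ne tk] e k_def by simp
qed

lemma Gauss_fail:
  assumes t: "t \<in> prime_factors n" and sq: "squarefree n" and n1: "n > 1" and np: "\<not> prime n"
    and chi_ins: "\<And>A. A \<subseteq> prime_factors n \<Longrightarrow> A \<noteq> {} \<Longrightarrow> t \<notin> A \<Longrightarrow> chi (insert t A) = chi A"
  shows "\<not> q_Gauss_at a n"
proof
  assume G: "q_Gauss_at a n"
  have n0: "n > 0" using n1 by simp
  have tp: "prime t" and tn: "t dvd n" using t by (auto simp: in_prime_factors_iff)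
  have t1: "t > 1" using tp prime_gt_1_nat by blast
  define k where "k = n div t"
  have nk: "n = t*k" using tn k_def by simp
  have k2: "k \<ge> 2"
  proof -
    have "k \<noteq> 0" using nk n0 by auto
    moreover have "k \<noteq> 1" using nk np tp by auto
    ultimately show ?thesis by simp
  qed
  define g where "g d = smult (moebius d) (T n d)" for d
  define D where "D = {d. d dvd n}"
  define R where "R = D - {n} - {k}"
  have finD: "finite D" using finite_div[OF n0, of "\<lambda>_. True"] D_def by simp
  have kn: "k \<noteq> n" using nk t1 n0 by simp
  have tk: "\<not> t dvd k" using sqf_div_prime[OF sq tp tn] k_def by simp
  have tog_n: "tog t n = k" using tn k_def by (simp add: tog_def)
  have tog_k: "tog t k = n" using tk nk by (simp add: tog_def mult.commute)
  have sqD: "squarefree d" if "d \<in> D" for d using that sq D_def squarefree_mono by blast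
  have ltD: "d < n" if "d \<in> R" for d using that R_def D_def dvd_imp_le[of d n] n0 by fastforce
  have R0: "sum g R = 0"
  proof -
    have facts: "tog t d \<in> R \<and> tog t (tog t d) = d \<and> g (tog t d) = - g d" if dR: "d \<in> R" for d
    proof -
      have dD: "d dvd n" "squarefree d" using dR sqD R_def D_def by auto
      note f = tog_facts[OF tp tn n0 dD]
      have inR: "tog t d \<in> R"
      proof -
        have "tog t d \<noteq> n" using f(2) tog_n dR R_def by force
        moreover have "tog t d \<noteq> k" using f(2) tog_k dR R_def by force
        ultimately show ?thesis using f(1) R_def D_def by auto
      qed
      have chieq: "chi (prime_factors (n div d)) = chi (prime_factors (n div tog t d))"
      proof (cases "t dvd d")
        case True
        define d' where "d' = d div t"
        have dd: "d = d'*t" using True d'_def by simp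
        have nd: "\<not> t dvd d'" using sqf_div_prime[OF dD(2) tp True] d'_def by simp
        have gt: "n div (d'*t) > 1"
        proof -
          have "d \<le> n" "d > 0" using dD n0 dvd_imp_le by (auto intro!: gr0I)
          then have "n div d \<noteq> 0" by (simp add: div_greater_zero_iff)
          moreover have "d \<noteq> n" using dR R_def by auto
          then have "n div d \<noteq> 1" using dD(1) by (metis dvd_mult_div_cancel mult_1_right)
          ultimately show ?thesis using dd by simp
        qed
        have d'n: "d'*t dvd n" using dD(1) dd by simp
        have c: "chi (prime_factors (n div d')) = chi (prime_factors (n div (d'*t)))"
          using chi_step[OF t sq n0 chi_ins nd d'n gt] .
        have tg: "tog t d = d'" using True d'_def by (simp add: tog_def)
        show ?thesis unfolding tg using c dd by simp
      next
        case False
        have dt: "d*t dvd n" using coprime_mult_dvd[OF tp False dD(1) tn] .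
        have gt: "n div (d*t) > 1"
        proof -
          have "d*t \<le> n" "d*t > 0" using dt n0 dvd_imp_le by (auto intro!: gr0I)
          then have "n div (d*t) \<noteq> 0" by (simp add: div_greater_zero_iff)
          moreover have "n div (d*t) \<noteq> 1"
          proof
            assume "n div (d*t) = 1"
            then have "n = d*t" using dt by (metis dvd_mult_div_cancel mult_1_right)
            then have "d = k" using k_def t1 by simp
            then show False using dR R_def by auto
          qed
          ultimately show ?thesis by simp
        qed
        show ?thesis using chi_step[OF t sq n0 chi_ins False dt gt] False by (simp add: tog_def)
      qed
      have "T n (tog t d) = T n d"
        using T_lt[OF dD(1) ltD[OF dR]] T_lt[OF f(1) ltD[OF inR]] chieq by simp
      then have "g (tog t d) = - g d" using f(3) g_def by simp
      then show ?thesis using inR f(2) by simp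
    qed
    have "sum (\<lambda>d. - g d) R = sum g R"
      by (rule sum.reindex_bij_witness[where i="tog t" and j="tog t"]) (use facts in auto)
    then have "sum g R = - sum g R" by (simp add: sum_negf)
    then show ?thesis by (rule x_eq_neg_x)
  qed
  have nD: "n \<in> D" and kD: "k \<in> D - {n}" using D_def k_def kn tn by auto
  have "sum g D = g n + sum g (D - {n})" using sum.remove[OF finD nD] .
  also have "sum g (D - {n}) = g k + sum g R"
    using sum.remove[OF _ kD] finD R_def by simp
  finally have sD: "sum g D = g n + g k" using R0 by simp
  have "qint n dvd sum g D" using G unfolding q_Gauss_at_def g_def D_def T_def by simp
  moreover have "qint n dvd g n" unfolding g_def T_n[OF n0] by (rule dvd_smult, rule dvd_triv_right)
  ultimately have "qint n dvd g k" using sD by (metis dvd_add_right_iff)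
  moreover have "g k = smult (moebius k) (subst_pow (qint t) k)"
    using T_prime[OF tn tp n0] g_def k_def by simp
  moreover have "moebius k = 1 \<or> moebius k = -1"
    using moebius_div_prime[OF sq n0 tp tn] k_def sq n0
    by (cases "even (card (prime_factors n))") (auto simp: moebius_def)
  ultimately have dv: "qint n dvd subst_pow (qint t) k" by auto
  have degW: "degree (subst_pow (qint t) k) = (t - 1) * k"
    unfolding subst_pow_def using t1 by (simp add: degree_pcompose degree_qint degree_monom_eq)
  then have "subst_pow (qint t) k \<noteq> 0" using t1 k2 by auto
  then have "degree (qint n) \<le> (t - 1) * k" using dvd_imp_degree_le[OF dv] degW by simp
  then have "n - 1 \<le> (t - 1) * k" using degree_qint n0 by simp
  moreover have "(t - 1) * k = n - k" using nk by (simp add: diff_mult_distrib)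
  moreover have "2*k \<le> t*k" using t1 by simp
  ultimately show False using k2 nk t1 by linarith
qed

end


lemma pf_ne: "(m::nat) > 1 \<Longrightarrow> prime_factors m \<noteq> {}"
proof -
  assume m: "m > 1"
  obtain q where "prime q" "q dvd m" using prime_factor_nat[of m] m by auto
  then have "q \<in> prime_factors m" using m by (auto simp: in_prime_factors_iff)
  then show ?thesis by auto
qed

lemma Max_pf: "(m::nat) > 1 \<Longrightarrow> Max (prime_factors m) \<in> prime_factors m"
  using pf_ne by (intro Max_in) auto

lemma Min_pf: "(m::nat) > 1 \<Longrightarrow> Min (prime_factors m) \<in> prime_factors m"
  using pf_ne by (intro Min_in) auto

lemma pf_prime_mem: "p \<in> prime_factors (m::nat) \<Longrightarrow> prime p"
  by (auto simp: in_prime_factors_iff)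

interpretation Gq: qseq G_seq Max
proof
  show "G_seq 1 = [:-1,1:]" by (simp add: G_seq_def)
  fix m :: nat assume m: "m > 1"
  show "Max (prime_factors m) \<in> prime_factors m" using Max_pf[OF m] .
  show "G_seq m = subst_pow (qint (Max (prime_factors m))) (m div Max (prime_factors m))"
    using m cyclotomic_prime[OF pf_prime_mem[OF Max_pf[OF m]]] by (simp add: G_seq_def)
qed

interpretation Sq: qseq S_seq Min
proof
  show "S_seq 1 = [:-1,1:]" by (simp add: S_seq_def)
  fix m :: nat assume m: "m > 1"
  show "Min (prime_factors m) \<in> prime_factors m" using Min_pf[OF m] .
  show "S_seq m = subst_pow (qint (Min (prime_factors m))) (m div Min (prime_factors m))"
    using m cyclotomic_prime[OF pf_prime_mem[OF Min_pf[OF m]]] by (simp add: S_seq_def)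
qed

theorem theorem10:
  shows "q_Euler_Gauss G_seq \<and> q_Euler_Gauss S_seq \<and>
         (\<forall>n::nat. n > 1 \<and> \<not> prime n \<and> squarefree n \<longrightarrow>
            \<not> q_Gauss_at G_seq n \<and> \<not> q_Gauss_at S_seq n)"
proof (intro conjI allI impI)
  show "q_Euler_Gauss G_seq" by (rule Gq.EG)
  show "q_Euler_Gauss S_seq" by (rule Sq.EG)
next
  fix n :: nat assume n: "n > 1 \<and> \<not> prime n \<and> squarefree n"
  then have n1: "n > 1" and np: "\<not> prime n" and sq: "squarefree n" by auto
  have fin: "finite (prime_factors n)" by simp
  show "\<not> q_Gauss_at G_seq n"
  proof (rule Gq.Gauss_fail[OF Min_pf[OF n1] sq n1 np])
    fix A assume A: "A \<subseteq> prime_factors n" "A \<noteq> {}" "Min (prime_factors n) \<notin> A"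
    have finA: "finite A" using A(1) fin finite_subset by blast
    have "Min (prime_factors n) \<le> Max A"
      using A finA Max_in[OF finA A(2)] Min_le[OF fin] by blast
    then show "Max (insert (Min (prime_factors n)) A) = Max A"
      using Max_insert[OF finA A(2)] by simp
  qed
  show "\<not> q_Gauss_at S_seq n"
  proof (rule Sq.Gauss_fail[OF Max_pf[OF n1] sq n1 np])
    fix A assume A: "A \<subseteq> prime_factors n" "A \<noteq> {}" "Max (prime_factors n) \<notin> A"
    have finA: "finite A" using A(1) fin finite_subset by blast
    have "Min A \<le> Max (prime_factors n)"
      using A finA Min_in[OF finA A(2)] Max_ge[OF fin] by blast
    then show "Min (insert (Max (prime_factors n)) A) = Min A"
      using Min_insert[OF finA A(2)] by simp
  qed
qed

end
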